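(* Let $G$ be a finite connected graph in which every half-edge is labeled with exactly one label from $\{\mathsf{L},\mathsf{R},\mathsf{P},\mathsf{Ch_L},\mathsf{Ch_R}\}$ such that every node satisfies the following constraints: (a) any two edges incident to a node $u$ have different labels at $u$; (b) for every edge $e=\{u,v\}$, $L_u(e)=\mathsf{L}$ iff $L_v(e)=\mathsf{R}$; (c) for every edge $e=\{u,v\}$, $L_u(e)=\mathsf{P}$ iff $L_v(e)\in\{\mathsf{Ch_L},\mathsf{Ch_R}\}$; (d) if $u$ has an incident edge $e=\{u,v\}$ with $L_u(e)=\mathsf{P}$ and $L_v(e)=\mathsf{Ch_L}$, then $f_u(\mathsf{P},\mathsf{Ch_R},\mathsf{L})=u$; (e) if $u$ has an incident edge $e=\{u,v\}$ with $L_u(e)=\mathsf{P}$ and $L_v(e)=\mathsf{Ch_R}$, and $u$ has an incident half-edge labeled $\mathsf{R}$, then $f_u(\mathsf{P},\mathsf{R},\mathsf{Ch_L},\mathsf{L})=u$; (f) a node has an incident half-edge labeled $\mathsf{Ch_L}$ iff it has one labeled $\mathsf{Ch_R}$; (g) a node has no incident half-edge labeled $\mathsf{P}$ iff it has no incident half-edges labeled $\mathsf{L}$ or $\mathsf{R}$; (h) if $u$ has no incident half-edge labeled $\mathsf{Ch_L}$ or $\mathsf{Ch_R}$, then neither do $f_u(\mathsf{L})$ and $f_u(\mathsf{R})$ (if they exist); (i) if $u$ has an incident edge $e=\{u,v\}$ with $L_u(e)=\mathsf{P}$ and $L_v(e)=\mathsf{Ch_R}$ (resp. $\mathsf{Ch_L}$),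 then $u$ has an incident half-edge labeled $\mathsf{R}$ (resp. $\mathsf{L}$) iff $f_u(\mathsf{P})$ has one. Then $G$ is a tree-like structure.
   Context: $L_u(e)$ denotes the label of half-edge $(u,e)$. For a node $u$ and labels $L_1,\dots,L_k$, $f_u(L_1,\dots,L_k)$ is the endpoint $v_{k+1}$ of the path $u=v_1,\dots,v_{k+1}$ where $v_{i+1}$ is reached from $v_i$ via the edge $e_i$ with $L_{v_i}(e_i)=L_i$, if this path exists and is unique; otherwise it is $\bot$ ("exists" means $\neq\bot$). A graph is a tree-like structure of height $\ell$ if its nodes can be assigned (distinct) coordinates $(l_u,k_u)$ with $0\le l_u<\ell$ and $0\le k_u<2^{l_u}$ such that for nodes $u,v$ with $l_v\le l_u$, $k_v\le k_u$ there is an edge $\{u,v\}$ iff $(l_v,k_v)=(l_u-1,\lfloor k_u/2\rfloor)$ or $(l_u,k_u)=(l_v,k_v+1)$. *)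

theory Defs
  imports Main
begin

datatype label = Lb | Rb | Pb | ChL | ChR

definition simple_graph :: "'a set \<Rightarrow> 'a set set \<Rightarrow> bool" where
  "simple_graph V E \<longleftrightarrow> finite V \<and>
     (\<forall>e\<in>E. \<exists>u v. e = {u, v} \<and> u \<noteq> v \<and> u \<in> V \<and> v \<in> V)"

definition connected_graph :: "'a set \<Rightarrow> 'a set set \<Rightarrow> bool" where
  "connected_graph V E \<longleftrightarrow>
     (\<forall>u\<in>V. \<forall>v\<in>V. (u, v) \<in> {(x, y). {x, y} \<in> E}\<^sup>*)"

text \<open>Half-edge (u,e) has label lab u e (meaningful when u \<in> e \<in> E).\<close>
definition has_label :: "'a set set \<Rightarrow> ('a \<Rightarrow> 'a set \<Rightarrow> label) \<Rightarrow> 'a \<Rightarrow> label \<Rightarrow> bool" where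
  "has_label E lab u l \<longleftrightarrow> (\<exists>e\<in>E. u \<in> e \<and> lab u e = l)"

definition label_walks :: "'a set set \<Rightarrow> ('a \<Rightarrow> 'a set \<Rightarrow> label) \<Rightarrow> 'a \<Rightarrow> label list \<Rightarrow> 'a list set" where
  "label_walks E lab u Ls = {ws. length ws = Suc (length Ls) \<and> ws ! 0 = u \<and>
     (\<forall>i < length Ls. {ws ! i, ws ! Suc i} \<in> E \<and> lab (ws ! i) {ws ! i, ws ! Suc i} = Ls ! i)}"

text \<open>f_u(L_1,...,L_k): endpoint of the unique such walk; None plays the role of \<bottom>.\<close>
definition fpath :: "'a set set \<Rightarrow> ('a \<Rightarrow> 'a set \<Rightarrow> label) \<Rightarrow> 'a \<Rightarrow> label list \<Rightarrow> 'a option" where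
  "fpath E lab u Ls = (if \<exists>!ws. ws \<in> label_walks E lab u Ls
      then Some (last (THE ws. ws \<in> label_walks E lab u Ls)) else None)"

definition valid_labeling :: "'a set \<Rightarrow> 'a set set \<Rightarrow> ('a \<Rightarrow> 'a set \<Rightarrow> label) \<Rightarrow> bool" where
  "valid_labeling V E lab \<longleftrightarrow>
   \<comment> \<open>(a)\<close>
   (\<forall>u e e'. e \<in> E \<and> e' \<in> E \<and> u \<in> e \<and> u \<in> e' \<and> e \<noteq> e' \<longrightarrow> lab u e \<noteq> lab u e') \<and>
   \<comment> \<open>(b)\<close>
   (\<forall>u v. {u, v} \<in> E \<longrightarrow> (lab u {u, v} = Lb \<longleftrightarrow> lab v {u, v} = Rb)) \<and>
   \<comment> \<open>(c)\<close>
   (\<forall>u v. {u, v} \<in> E \<longrightarrow> (lab u {u, v} = Pb \<longleftrightarrow> lab v {u, v} \<in> {ChL, ChR})) \<and>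
   \<comment> \<open>(d)\<close>
   (\<forall>u v. {u, v} \<in> E \<and> lab u {u, v} = Pb \<and> lab v {u, v} = ChL \<longrightarrow>
      fpath E lab u [Pb, ChR, Lb] = Some u) \<and>
   \<comment> \<open>(e)\<close>
   (\<forall>u v. {u, v} \<in> E \<and> lab u {u, v} = Pb \<and> lab v {u, v} = ChR \<and> has_label E lab u Rb \<longrightarrow>
      fpath E lab u [Pb, Rb, ChL, Lb] = Some u) \<and>
   \<comment> \<open>(f)\<close>
   (\<forall>u\<in>V. has_label E lab u ChL \<longleftrightarrow> has_label E lab u ChR) \<and>
   \<comment> \<open>(g)\<close>
   (\<forall>u\<in>V. \<not> has_label E lab u Pb \<longleftrightarrow> \<not> (has_label E lab u Lb \<or> has_label E lab u Rb)) \<and>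
   \<comment> \<open>(h)\<close>
   (\<forall>u\<in>V. \<not> has_label E lab u ChL \<and> \<not> has_label E lab u ChR \<longrightarrow>
      (\<forall>w l. l \<in> {Lb, Rb} \<and> fpath E lab u [l] = Some w \<longrightarrow>
          \<not> has_label E lab w ChL \<and> \<not> has_label E lab w ChR)) \<and>
   \<comment> \<open>(i)\<close>
   (\<forall>u v. {u, v} \<in> E \<and> lab u {u, v} = Pb \<and> lab v {u, v} = ChR \<longrightarrow>
      (has_label E lab u Rb \<longleftrightarrow> (\<exists>w. fpath E lab u [Pb] = Some w \<and> has_label E lab w Rb))) \<and>
   (\<forall>u v. {u, v} \<in> E \<and> lab u {u, v} = Pb \<and> lab v {u, v} = ChL \<longrightarrow>
      (has_label E lab u Lb \<longleftrightarrow> (\<exists>w. fpath E lab u [Pb] = Some w \<and> has_label E lab w Lb)))"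

text \<open>Tree-like structure of height h: distinct coordinates (l,k), l < h, k < 2^l;
  adjacency = parent/child or horizontal neighbours (k and k+1 on the same level).\<close>
definition tree_coord_adj :: "nat \<times> nat \<Rightarrow> nat \<times> nat \<Rightarrow> bool" where
  "tree_coord_adj cu cv \<longleftrightarrow>
     (fst cv + 1 = fst cu \<and> snd cv = snd cu div 2) \<or> (cu = (fst cv, snd cv + 1))"

definition tree_like :: "'a set \<Rightarrow> 'a set set \<Rightarrow> nat \<Rightarrow> bool" where
  "tree_like V E h \<longleftrightarrow> (\<exists>c :: 'a \<Rightarrow> nat \<times> nat.
     inj_on c V \<and> (\<forall>u\<in>V. fst (c u) < h \<and> snd (c u) < 2 ^ fst (c u)) \<and>
     (\<forall>u\<in>V. \<forall>v\<in>V. {u, v} \<in> E \<longleftrightarrow> tree_coord_adj (c u) (c v) \<or> tree_coord_adj (c v) (c u)))"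

definition tree_like_structure :: "'a set \<Rightarrow> 'a set set \<Rightarrow> bool" where
  "tree_like_structure V E \<longleftrightarrow> (\<exists>h. tree_like V E h)"

end

theory Submission
  imports Defs
begin
locale LG =
  fixes V :: "'a set" and E :: "'a set set" and lab :: "'a \<Rightarrow> 'a set \<Rightarrow> label"
  assumes sg: "simple_graph V E" and vl: "valid_labeling V E lab"
begin

definition step :: "'a \<Rightarrow> label \<Rightarrow> 'a \<Rightarrow> bool" where
  "step u l v \<longleftrightarrow> {u, v} \<in> E \<and> lab u {u, v} = l"

lemma finV: "finite V" using sg by (simp add: simple_graph_def)

lemma edge_form: "e \<in> E \<Longrightarrow> \<exists>u v. e = {u, v} \<and> u \<noteq> v \<and> u \<in> V \<and> v \<in> V"
  using sg by (simp add: simple_graph_def)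

lemma edge_V: "{u, v} \<in> E \<Longrightarrow> u \<in> V \<and> v \<in> V \<and> u \<noteq> v"
  using edge_form[of "{u,v}"] by (auto simp: doubleton_eq_iff)

lemma step_V: "step u l v \<Longrightarrow> u \<in> V \<and> v \<in> V \<and> u \<noteq> v"
  using edge_V by (auto simp: step_def)

lemma step_uniq: assumes "step u l v" "step u l w" shows "v = w"
proof -
  have a: "\<forall>u e e'. e \<in> E \<and> e' \<in> E \<and> u \<in> e \<and> u \<in> e' \<and> e \<noteq> e' \<longrightarrow> lab u e \<noteq> lab u e'"
    using vl by (simp add: valid_labeling_def)
  have "{u,v} = {u,w}" using a assms unfolding step_def by blast
  moreover have "u \<noteq> v" using step_V assms by blast
  ultimately show ?thesis by (auto simp: doubleton_eq_iff)
qed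

lemma step_lab: "step u l v \<Longrightarrow> step u l' v \<Longrightarrow> l = l'"
  by (simp add: step_def)

lemma has_iff: "has_label E lab u l \<longleftrightarrow> (\<exists>v. step u l v)"
proof
  assume "has_label E lab u l"
  then obtain e where e: "e \<in> E" "u \<in> e" "lab u e = l" by (auto simp: has_label_def)
  then obtain a b where "e = {a,b}" using edge_form by blast
  then show "\<exists>v. step u l v" using e unfolding step_def
    by (metis empty_iff insert_commute insert_iff)
next
  assume "\<exists>v. step u l v" then show "has_label E lab u l"
    by (auto simp: has_label_def step_def)
qed

lemma walks_iff: "ws \<in> label_walks E lab u Ls \<longleftrightarrow> length ws = Suc (length Ls) \<and> ws ! 0 = u \<and>
     (\<forall>i < length Ls. step (ws ! i) (Ls ! i) (ws ! Suc i))"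
  by (simp add: label_walks_def step_def)

lemma fpath_walk: assumes "fpath E lab u Ls = Some w"
  shows "\<exists>ws. length ws = Suc (length Ls) \<and> ws ! 0 = u \<and>
     (\<forall>i < length Ls. step (ws ! i) (Ls ! i) (ws ! Suc i)) \<and> ws ! length Ls = w"
proof -
  have ex: "\<exists>!ws. ws \<in> label_walks E lab u Ls" and w: "w = last (THE ws. ws \<in> label_walks E lab u Ls)"
    using assms by (auto simp: fpath_def split: if_splits)
  define ws where "ws = (THE ws. ws \<in> label_walks E lab u Ls)"
  have "ws \<in> label_walks E lab u Ls" unfolding ws_def using theI'[OF ex] .
  moreover have "last ws = ws ! length Ls" using calculation unfolding walks_iff
    by (metis last_conv_nth length_0_conv nat.distinct(1) diff_Suc_1)
  ultimately show ?thesis using w ws_def by (auto simp: walks_iff)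
qed

lemma fpath_single: "fpath E lab u [l] = Some w \<longleftrightarrow> step u l w"
proof
  assume "fpath E lab u [l] = Some w"
  from fpath_walk[OF this] show "step u l w" by auto
next
  assume s: "step u l w"
  have mem: "[u,w] \<in> label_walks E lab u [l]" using s by (simp add: walks_iff)
  have un: "ws = [u,w]" if "ws \<in> label_walks E lab u [l]" for ws
  proof -
    have L: "length ws = 2" "ws ! 0 = u" "step u l (ws ! 1)" using that by (auto simp: walks_iff)
    then have "ws ! 1 = w" using step_uniq s by blast
    with L show ?thesis
      by (cases ws; cases "tl ws"; auto)
  qed
  have "\<exists>!ws. ws \<in> label_walks E lab u [l]" using mem un by blast
  moreover have "(THE ws. ws \<in> label_walks E lab u [l]) = [u,w]" using mem un by blast
  ultimately show "fpath E lab u [l] = Some w" by (simp add: fpath_def)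
qed

lemma LR: "step u Lb v \<longleftrightarrow> step v Rb u"
proof -
  have b: "\<forall>u v. {u, v} \<in> E \<longrightarrow> (lab u {u, v} = Lb \<longleftrightarrow> lab v {u, v} = Rb)"
    using vl by (simp add: valid_labeling_def)
  show ?thesis using b[rule_format, of u v] unfolding step_def by (auto simp: insert_commute)
qed

lemma cP: "{u, v} \<in> E \<Longrightarrow> (lab u {u, v} = Pb \<longleftrightarrow> lab v {u, v} \<in> {ChL, ChR})"
  using vl by (simp add: valid_labeling_def)

lemma PC: "step u Pb v \<Longrightarrow> step v ChL u \<or> step v ChR u"
  using cP[of u v] unfolding step_def by (auto simp: insert_commute)

lemma CLP: "step v ChL u \<Longrightarrow> step u Pb v"
  using cP[of u v] unfolding step_def by (auto simp: insert_commute)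

lemma CRP: "step v ChR u \<Longrightarrow> step u Pb v"
  using cP[of u v] unfolding step_def by (auto simp: insert_commute)

lemma ax_d: assumes "step u Pb v" "step v ChL u" shows "\<exists>x. step v ChR x \<and> step x Lb u"
proof -
  have d: "\<forall>u v. {u, v} \<in> E \<and> lab u {u, v} = Pb \<and> lab v {u, v} = ChL \<longrightarrow>
      fpath E lab u [Pb, ChR, Lb] = Some u" using vl by (simp add: valid_labeling_def)
  have "fpath E lab u [Pb, ChR, Lb] = Some u" using d assms unfolding step_def by (auto simp: insert_commute)
  from fpath_walk[OF this] obtain ws where ws: "ws ! 0 = u"
     "\<forall>i < length [Pb, ChR, Lb]. step (ws ! i) ([Pb, ChR, Lb] ! i) (ws ! Suc i)" "ws ! length [Pb, ChR, Lb] = u" by blast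
  have s: "step u Pb (ws ! Suc 0)" "step (ws ! Suc 0) ChR (ws ! Suc (Suc 0))" "step (ws ! Suc (Suc 0)) Lb u"
    using ws(2)[rule_format, of 0] ws(2)[rule_format, of "Suc 0"] ws(2)[rule_format, of "Suc (Suc 0)"] ws(1) ws(3)
    by simp_all
  have v1: "ws ! Suc 0 = v" by (rule step_uniq[OF s(1) assms(1)])
  show ?thesis using s v1 by blast
qed

lemma ax_e: assumes "step u Pb v" "step v ChR u" "step u Rb y"
  shows "\<exists>q x. step v Rb q \<and> step q ChL x \<and> step x Lb u"
proof -
  have e: "\<forall>u v. {u, v} \<in> E \<and> lab u {u, v} = Pb \<and> lab v {u, v} = ChR \<and> has_label E lab u Rb \<longrightarrow>
      fpath E lab u [Pb, Rb, ChL, Lb] = Some u" using vl by (simp add: valid_labeling_def)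
  have "has_label E lab u Rb" using assms(3) has_iff by blast
  then have "fpath E lab u [Pb, Rb, ChL, Lb] = Some u" using e assms unfolding step_def by (auto simp: insert_commute)
  from fpath_walk[OF this] obtain ws where ws: "ws ! 0 = u"
     "\<forall>i < length [Pb, Rb, ChL, Lb]. step (ws ! i) ([Pb, Rb, ChL, Lb] ! i) (ws ! Suc i)" "ws ! length [Pb, Rb, ChL, Lb] = u" by blast
  have s: "step u Pb (ws ! Suc 0)" "step (ws ! Suc 0) Rb (ws ! Suc (Suc 0))"
    "step (ws ! Suc (Suc 0)) ChL (ws ! Suc (Suc (Suc 0)))" "step (ws ! Suc (Suc (Suc 0))) Lb u"
    using ws(2)[rule_format, of 0] ws(2)[rule_format, of "Suc 0"] ws(2)[rule_format, of "Suc (Suc 0)"]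
      ws(2)[rule_format, of "Suc (Suc (Suc 0))"] ws(1) ws(3)
    by simp_all
  have v1: "ws ! Suc 0 = v" by (rule step_uniq[OF s(1) assms(1)])
  show ?thesis using s v1 by blast
qed

lemma ax_f: assumes "u \<in> V" shows "(\<exists>x. step u ChL x) \<longleftrightarrow> (\<exists>x. step u ChR x)"
proof -
  have f: "\<forall>u\<in>V. has_label E lab u ChL \<longleftrightarrow> has_label E lab u ChR"
    using vl unfolding valid_labeling_def by (elim conjE) assumption
  show ?thesis using f assms unfolding has_iff by blast
qed

lemma ax_g: assumes "u \<in> V" shows "(\<exists>p. step u Pb p) \<longleftrightarrow> (\<exists>x. step u Lb x) \<or> (\<exists>x. step u Rb x)"
proof -
  have g: "\<forall>u\<in>V. \<not> has_label E lab u Pb \<longleftrightarrow> \<not> (has_label E lab u Lb \<or> has_label E lab u Rb)"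
    using vl unfolding valid_labeling_def by (elim conjE) assumption
  show ?thesis using g[rule_format, OF assms] unfolding has_iff by blast
qed

lemma ax_h: assumes "u \<in> V" "\<not> (\<exists>x. step u ChL x)" "step u Lb w \<or> step u Rb w"
  shows "\<not> (\<exists>x. step w ChL x)"
proof -
  have h: "\<forall>u\<in>V. \<not> has_label E lab u ChL \<and> \<not> has_label E lab u ChR \<longrightarrow>
      (\<forall>w l. l \<in> {Lb, Rb} \<and> fpath E lab u [l] = Some w \<longrightarrow>
          \<not> has_label E lab w ChL \<and> \<not> has_label E lab w ChR)"
    using vl unfolding valid_labeling_def by (elim conjE) assumption
  have "\<not> (\<exists>x. step u ChR x)" using ax_f assms by blast
  then show ?thesis using h[rule_format, OF assms(1)] assms by (auto simp: has_iff fpath_single)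
qed

lemma ax_iR: assumes "step u Pb v" "step v ChR u"
  shows "(\<exists>y. step u Rb y) \<longleftrightarrow> (\<exists>y. step v Rb y)"
proof -
  have i: "\<forall>u v. {u, v} \<in> E \<and> lab u {u, v} = Pb \<and> lab v {u, v} = ChR \<longrightarrow>
      (has_label E lab u Rb \<longleftrightarrow> (\<exists>w. fpath E lab u [Pb] = Some w \<and> has_label E lab w Rb))"
    using vl unfolding valid_labeling_def by (elim conjE) assumption
  have c: "{u, v} \<in> E \<and> lab u {u, v} = Pb \<and> lab v {u, v} = ChR" using assms
    by (auto simp: step_def insert_commute)
  have "has_label E lab u Rb \<longleftrightarrow> (\<exists>w. fpath E lab u [Pb] = Some w \<and> has_label E lab w Rb)"
    using i c by blast
  then have "has_label E lab u Rb \<longleftrightarrow> (\<exists>w. step u Pb w \<and> has_label E lab w Rb)"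
    unfolding fpath_single .
  also have "\<dots> \<longleftrightarrow> has_label E lab v Rb" using step_uniq assms(1) by blast
  finally show ?thesis unfolding has_iff .
qed

lemma ax_iL: assumes "step u Pb v" "step v ChL u"
  shows "(\<exists>y. step u Lb y) \<longleftrightarrow> (\<exists>y. step v Lb y)"
proof -
  have i: "\<forall>u v. {u, v} \<in> E \<and> lab u {u, v} = Pb \<and> lab v {u, v} = ChL \<longrightarrow>
      (has_label E lab u Lb \<longleftrightarrow> (\<exists>w. fpath E lab u [Pb] = Some w \<and> has_label E lab w Lb))"
    using vl unfolding valid_labeling_def by (elim conjE) assumption
  have c: "{u, v} \<in> E \<and> lab u {u, v} = Pb \<and> lab v {u, v} = ChL" using assms
    by (auto simp: step_def insert_commute)
  have "has_label E lab u Lb \<longleftrightarrow> (\<exists>w. fpath E lab u [Pb] = Some w \<and> has_label E lab w Lb)"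
    using i c by blast
  then have "has_label E lab u Lb \<longleftrightarrow> (\<exists>w. step u Pb w \<and> has_label E lab w Lb)"
    unfolding fpath_single .
  also have "\<dots> \<longleftrightarrow> has_label E lab v Lb" using step_uniq assms(1) by blast
  finally show ?thesis unfolding has_iff .
qed

end

context LG
begin

definition childful :: "'a \<Rightarrow> bool" where "childful u \<longleftrightarrow> (\<exists>x. step u ChL x)"
definition chld :: "'a \<Rightarrow> label \<Rightarrow> 'a" where "chld u s = (THE x. step u s x)"

lemma chld_eq: "step u s x \<Longrightarrow> chld u s = x"
  unfolding chld_def using step_uniq by blast

lemma childful_steps: assumes "u \<in> V" "childful u"
  shows "step u ChL (chld u ChL)" "step u ChR (chld u ChR)"
proof -
  obtain a where a: "step u ChL a" using assms(2) childful_def by blast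
  obtain b where b: "step u ChR b" using ax_f[OF assms(1)] a by blast
  show "step u ChL (chld u ChL)" using a chld_eq by simp
  show "step u ChR (chld u ChR)" using b chld_eq by simp
qed

fun full :: "nat \<Rightarrow> 'a \<Rightarrow> bool" where
  "full 0 u = True"
| "full (Suc n) u = (childful u \<and> full n (chld u ChL) \<and> full n (chld u ChR))"

declare full.simps(2)[simp del]

lemma sib_step: assumes "step p ChL a" "step p ChR b" shows "step a Rb b"
proof -
  obtain x where x: "step p ChR x" "step x Lb a" using ax_d[OF CLP[OF assms(1)] assms(1)] by blast
  have "x = b" using step_uniq x(1) assms(2) by blast
  then show ?thesis using x(2) LR by simp
qed

lemma cross_step: assumes "step u Rb w" "step u ChR b" "step w ChL c" shows "step b Rb c"
proof -
  have bp: "step b Pb u" using CRP[OF assms(2)] .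
  have "\<exists>y. step b Rb y" using ax_iR[OF bp assms(2)] assms(1) by blast
  then obtain y where y: "step b Rb y" by blast
  obtain q x where qx: "step u Rb q" "step q ChL x" "step x Lb b" using ax_e[OF bp assms(2) y] by blast
  have "q = w" using step_uniq qx(1) assms(1) by blast
  then have "x = c" using step_uniq qx(2) assms(3) by blast
  then show ?thesis using qx(3) LR by simp
qed

lemma childful_R: assumes "step u Rb w" shows "childful u \<longleftrightarrow> childful w"
proof -
  have uV: "u \<in> V" and wV: "w \<in> V" using step_V assms by auto
  have wl: "step w Lb u" using assms LR by simp
  show ?thesis
  proof
    assume cu: "childful u"
    show "childful w"
    proof (rule ccontr)
      assume "\<not> childful w"
      then have "\<not> (\<exists>x. step u ChL x)" using ax_h[OF wV _, of u] wl unfolding childful_def by blast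
      then show False using cu unfolding childful_def by blast
    qed
  next
    assume cw: "childful w"
    show "childful u"
    proof (rule ccontr)
      assume "\<not> childful u"
      then have "\<not> (\<exists>x. step w ChL x)" using ax_h[OF uV _, of w] assms unfolding childful_def by blast
      then show False using cw unfolding childful_def by blast
    qed
  qed
qed

lemma full_R: "step u Rb w \<Longrightarrow> full n u = full n w"
proof (induction n arbitrary: u w)
  case 0
  then show ?case by simp
next
  case (Suc n)
  have uV: "u \<in> V" and wV: "w \<in> V" using step_V Suc.prems by auto
  show ?case
  proof (cases "childful u")
    case False
    then show ?thesis using childful_R[OF Suc.prems] by (simp add: full.simps)
  next
    case True
    then have cw: "childful w" using childful_R[OF Suc.prems] by simp
    note su = childful_steps[OF uV True] and sw = childful_steps[OF wV cw]
    have 1: "step (chld u ChL) Rb (chld u ChR)" using sib_step su by blast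
    have 2: "step (chld u ChR) Rb (chld w ChL)" using cross_step Suc.prems su(2) sw(1) by blast
    have 3: "step (chld w ChL) Rb (chld w ChR)" using sib_step sw by blast
    show ?thesis using Suc.IH[OF 1] Suc.IH[OF 2] Suc.IH[OF 3] True cw by (simp add: full.simps)
  qed
qed

lemma sib_full: assumes "p \<in> V" "childful p" shows "full n (chld p ChL) = full n (chld p ChR)"
  using full_R sib_step childful_steps[OF assms] by blast

lemma par_childful: assumes "step u Pb p" shows "childful p" "p \<in> V"
proof -
  show pV: "p \<in> V" using step_V assms by auto
  show "childful p"
    using PC[OF assms] ax_f[OF pV] unfolding childful_def by blast
qed

lemma par_full: assumes "step u Pb p" shows "full (Suc n) p = full n u"
proof -
  have pV: "p \<in> V" and cp: "childful p" using par_childful assms by auto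
  have "u = chld p ChL \<or> u = chld p ChR" using PC[OF assms] chld_eq by metis
  then show ?thesis using sib_full[OF pV cp, of n] cp by (auto simp: full.simps)
qed

lemma full_mono1: "full (Suc n) u \<Longrightarrow> full n u"
proof (induction n arbitrary: u)
  case 0 then show ?case by simp
next
  case (Suc n)
  have a: "childful u" "full (Suc n) (chld u ChL)" "full (Suc n) (chld u ChR)"
    using Suc.prems by (simp_all only: full.simps)
  have b: "full n (chld u ChL)" "full n (chld u ChR)" by (rule Suc.IH[OF a(2)], rule Suc.IH[OF a(3)])
  show ?case using a(1) b by (simp only: full.simps simp_thms)
qed

lemma full_mono: "m \<le> n \<Longrightarrow> full n u \<Longrightarrow> full m u"
proof (induction rule: dec_induct)
  case base then show ?case .
next
  case (step k)
  then show ?case using full_mono1[of k u] by blast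
qed

lemma full1: "full (Suc 0) u = childful u" by (simp add: full.simps)

definition par :: "'a \<Rightarrow> 'a" where "par u = (THE p. step u Pb p)"

lemma par_eq: "step u Pb p \<Longrightarrow> par u = p"
  unfolding par_def using step_uniq by blast

lemma root_exists: assumes "V \<noteq> {}" shows "\<exists>r\<in>V. \<not> (\<exists>p. step r Pb p)"
proof (rule ccontr)
  assume "\<not> ?thesis"
  then have allp: "\<forall>u\<in>V. \<exists>p. step u Pb p" by blast
  then have sp: "step u Pb (par u)" if "u \<in> V" for u using that par_eq by blast
  show False
  proof (cases "\<exists>u\<in>V. \<exists>n. \<not> full n u")
    case True
    then obtain u n where uV: "u \<in> V" and nf: "\<not> full n u" by blast
    obtain m where m: "full m u" "\<not> full (Suc m) u"
    proof (cases n)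
      case 0 then show ?thesis using nf by simp
    next
      case (Suc k)
      define n0 where "n0 = (LEAST n. \<not> full n u)"
      have "\<not> full n0 u" unfolding n0_def by (rule LeastI[of _ n], rule nf)
      moreover have "n0 \<noteq> 0" using calculation by (cases n0) auto
      then obtain j where j: "n0 = Suc j" by (cases n0) auto
      moreover have "full j u" using not_less_Least[of j "\<lambda>n. \<not> full n u"] j n0_def by auto
      ultimately show ?thesis using that by auto
    qed
    define sq where "sq i = (par ^^ i) u" for i
    have P: "sq i \<in> V \<and> full (m + i) (sq i) \<and> \<not> full (Suc m + i) (sq i)" for i
    proof (induction i)
      case 0 then show ?case using uV m by (simp add: sq_def)
    next
      case (Suc i)
      have e: "sq (Suc i) = par (sq i)" by (simp add: sq_def)
      have s: "step (sq i) Pb (sq (Suc i))" using sp Suc.IH e by simp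
      have "sq (Suc i) \<in> V" using step_V s by auto
      moreover have "full (Suc (m+i)) (sq (Suc i)) = full (m+i) (sq i)" by (rule par_full[OF s])
      moreover have "full (Suc (Suc m + i)) (sq (Suc i)) = full (Suc m + i) (sq i)" by (rule par_full[OF s])
      ultimately show ?case using Suc.IH by simp
    qed
    have "inj sq"
    proof (rule injI)
      fix i j assume eq: "sq i = sq j"
      show "i = j"
      proof (rule ccontr)
        assume "i \<noteq> j"
        then have "i < j \<or> j < i" by auto
        then show False
        proof
          assume "i < j"
          then have "full (Suc m + i) (sq j)" using P[of j] full_mono[of "Suc m + i" "m + j"] by auto
          then show False using P[of i] eq by simp
        next
          assume "j < i"
          then have "full (Suc m + j) (sq i)" using P[of i] full_mono[of "Suc m + j" "m + i"] by auto
          then show False using P[of j] eq by simp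
        qed
      qed
    qed
    moreover have "range sq \<subseteq> V" using P by auto
    then have "finite (range sq)" using finV finite_subset by blast
    ultimately have "finite (UNIV :: nat set)" using finite_imageD by blast
    then show False by simp
  next
    case False
    then have cf: "childful u" if "u \<in> V" for u using that full1 by blast
    define g where "g = (\<lambda>(p, s). chld p s)"
    have gs: "step p s (g (p, s))" if "p \<in> V" "s \<in> {ChL, ChR}" for p s
      using childful_steps[OF that(1) cf[OF that(1)]] that(2) by (auto simp: g_def)
    have "inj_on g (V \<times> {ChL, ChR})"
    proof (rule inj_onI)
      fix a b assume a: "a \<in> V \<times> {ChL, ChR}" and b: "b \<in> V \<times> {ChL, ChR}" and eq: "g a = g b"
      obtain p s where ps: "a = (p, s)" "p \<in> V" "s \<in> {ChL, ChR}" using a by auto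
      obtain p' s' where ps': "b = (p', s')" "p' \<in> V" "s' \<in> {ChL, ChR}" using b by auto
      have s1: "step p s (g a)" using gs ps by simp
      have s2: "step p' s' (g a)" using gs ps' eq by simp
      have "step (g a) Pb p" using s1 ps(3) CLP CRP by auto
      moreover have "step (g a) Pb p'" using s2 ps'(3) CLP CRP by auto
      ultimately have "p = p'" using step_uniq by blast
      then have "s = s'" using s1 s2 step_lab by blast
      then show "a = b" using ps ps' \<open>p = p'\<close> by simp
    qed
    moreover have "g ` (V \<times> {ChL, ChR}) \<subseteq> V" using gs step_V by blast
    ultimately have "card (V \<times> {ChL, ChR}) \<le> card V" using card_inj_on_le finV by blast
    then have "card V * 2 \<le> card V" by (simp add: card_cartesian_product)
    then have "card V = 0" by simp
    then show False using assms finV by simp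
  qed
qed

end

definition side :: "nat \<Rightarrow> label" where "side k = (if even k then ChL else ChR)"

locale LGD = LG +
  fixes r :: 'a and D :: nat
  assumes rV: "r \<in> V" and rroot: "\<not> (\<exists>p. step r Pb p)" and fD: "full D r"
begin

fun node :: "nat \<Rightarrow> nat \<Rightarrow> 'a" where
  "node 0 k = r"
| "node (Suc l) k = chld (node l (k div 2)) (side k)"

lemma NF: "l \<le> D \<Longrightarrow> k < 2 ^ l \<Longrightarrow> node l k \<in> V \<and> (\<forall>m. full m (node l k) = full (m + l) r)"
proof (induction l arbitrary: k)
  case 0
  then show ?case using rV by simp
next
  case (Suc l)
  define p where "p = node l (k div 2)"
  have kd: "k div 2 < 2 ^ l" using Suc.prems by auto
  have IH: "p \<in> V" "\<And>m. full m p = full (m + l) r" using Suc.IH[OF _ kd] Suc.prems p_def by auto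
  have "full (Suc 0 + l) r" using full_mono[OF _ fD] Suc.prems by simp
  then have cp: "childful p" using IH(2)[of "Suc 0"] full1 by simp
  have st: "step p (side k) (node (Suc l) k)"
    using childful_steps[OF IH(1) cp] p_def by (simp add: side_def)
  have sp: "step (node (Suc l) k) Pb p" using st CLP CRP by (cases "even k") (auto simp: side_def)
  have "node (Suc l) k \<in> V" using step_V st by auto
  moreover have "full m (node (Suc l) k) = full (m + Suc l) r" for m
    using par_full[OF sp, of m] IH(2)[of "Suc m"] by simp
  ultimately show ?case by blast
qed

lemma N2: assumes "Suc l \<le> D" "k < 2 ^ Suc l"
  shows "step (node l (k div 2)) (side k) (node (Suc l) k) \<and> step (node (Suc l) k) Pb (node l (k div 2))"
proof -
  define p where "p = node l (k div 2)"
  have kd: "k div 2 < 2 ^ l" using assms by auto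
  have IH: "p \<in> V" "\<And>m. full m p = full (m + l) r" using NF[OF _ kd] assms p_def by auto
  have "full (Suc 0 + l) r" using full_mono[OF _ fD] assms by simp
  then have cp: "childful p" using IH(2)[of "Suc 0"] full1 by simp
  have st: "step p (side k) (node (Suc l) k)"
    using childful_steps[OF IH(1) cp] p_def by (simp add: side_def)
  have sp: "step (node (Suc l) k) Pb p" using st CLP CRP by (cases "even k") (auto simp: side_def)
  show ?thesis using st sp p_def by simp
qed

lemma node0_noP: "\<not> (\<exists>p. step (node 0 k) Pb p)" using rroot by simp

lemma ninj: "l \<le> D \<Longrightarrow> k < 2 ^ l \<Longrightarrow> l' \<le> D \<Longrightarrow> k' < 2 ^ l' \<Longrightarrow> node l k = node l' k' \<Longrightarrow> l = l' \<and> k = k'"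
proof (induction l arbitrary: k l' k')
  case 0
  show ?case
  proof (cases l')
    case 0 then show ?thesis using "0.prems" by simp
  next
    case (Suc l'')
    then have "step (node l' k') Pb (node l'' (k' div 2))" using N2[of l'' k'] "0.prems" by simp
    then show ?thesis using "0.prems"(5) node0_noP by metis
  qed
next
  case (Suc l)
  show ?case
  proof (cases l')
    case 0
    then have "step (node (Suc l) k) Pb (node l (k div 2))" using N2[of l k] Suc.prems by simp
    then show ?thesis using Suc.prems(5) node0_noP 0 by metis
  next
    case (Suc l'')
    have s1: "step (node (Suc l) k) Pb (node l (k div 2))" "step (node l (k div 2)) (side k) (node (Suc l) k)"
      using N2[of l k] Suc.prems by auto
    have s2: "step (node l' k') Pb (node l'' (k' div 2))" "step (node l'' (k' div 2)) (side k') (node l' k')"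
      using N2[of l'' k'] Suc.prems Suc by auto
    have "node l (k div 2) = node l'' (k' div 2)" using s1(1) s2(1) Suc.prems(5) step_uniq by metis
    moreover have "k div 2 < 2 ^ l" "k' div 2 < 2 ^ l''" "l \<le> D" "l'' \<le> D" using Suc.prems Suc by auto
    ultimately have e: "l = l''" "k div 2 = k' div 2" using Suc.IH[of "k div 2" l'' "k' div 2"] by auto
    have "side k = side k'" using s1(2) s2(2) Suc.prems(5) e step_lab by metis
    then have "k mod 2 = k' mod 2" by (auto simp: side_def split: if_splits) (simp_all add: odd_iff_mod_2_eq_one even_iff_mod_2_eq_zero)
    then have "k = k'" using e(2) by (metis div_mult_mod_eq)
    then show ?thesis using e Suc by simp
  qed
qed

lemma card_bound: "Suc D \<le> card V"
proof -
  have "inj_on (\<lambda>l. node l 0) {..D}"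
  proof (rule inj_onI)
    fix x y assume "x \<in> {..D}" "y \<in> {..D}" "node x 0 = node y 0"
    then show "x = y" using ninj[of x 0 y 0] by simp
  qed
  moreover have "(\<lambda>l. node l 0) ` {..D} \<subseteq> V" using NF by auto
  ultimately have "card {..D} \<le> card V" using card_inj_on_le finV by blast
  then show ?thesis by simp
qed

end

context LGD
begin

lemma N5: "l \<le> D \<Longrightarrow> k < 2 ^ l \<Longrightarrow>
  (Suc k < 2 ^ l \<longrightarrow> step (node l k) Rb (node l (Suc k))) \<and>
  (Suc k = 2 ^ l \<longrightarrow> \<not> (\<exists>y. step (node l k) Rb y)) \<and>
  (k = 0 \<longrightarrow> \<not> (\<exists>y. step (node l k) Lb y))"
proof (induction l arbitrary: k)
  case 0
  have "\<not> (\<exists>y. step r Rb y)" "\<not> (\<exists>y. step r Lb y)" using ax_g[OF rV] rroot by auto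
  then show ?case using "0.prems" by simp
next
  case (Suc l)
  define j where "j = k div 2"
  define p where "p = node l j"
  define x where "x = node (Suc l) k"
  have jl: "j < 2 ^ l" using Suc.prems j_def by auto
  have lD: "l \<le> D" using Suc.prems by simp
  note IH = Suc.IH[OF lD jl]
  have s: "step p (side k) x" "step x Pb p" using N2[of l k] Suc.prems p_def x_def j_def by auto
  show ?case
  proof (cases "even k")
    case True
    have sL: "step p ChL x" using s True by (simp add: side_def)
    have A: "Suc k < 2 ^ Suc l \<longrightarrow> step x Rb (node (Suc l) (Suc k))"
    proof
      assume a: "Suc k < 2 ^ Suc l"
      have "step (node l (Suc k div 2)) (side (Suc k)) (node (Suc l) (Suc k))" using N2[of l "Suc k"] a Suc.prems by auto
      then have "step p ChR (node (Suc l) (Suc k))" using True p_def j_def by (simp add: side_def)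
      then show "step x Rb (node (Suc l) (Suc k))" using sib_step sL by blast
    qed
    have B: "Suc k \<noteq> 2 ^ Suc l" using True by (metis dvd_power even_Suc zero_less_Suc even_numeral)
    have C: "k = 0 \<longrightarrow> \<not> (\<exists>y. step x Lb y)"
    proof
      assume "k = 0"
      then have "\<not> (\<exists>y. step p Lb y)" using IH j_def p_def by simp
      then show "\<not> (\<exists>y. step x Lb y)" using ax_iL[OF s(2) sL] by blast
    qed
    show ?thesis using A B C x_def by simp
  next
    case False
    have sR: "step p ChR x" using s False by (simp add: side_def)
    have kj: "k = 2 * j + 1" using False j_def by presburger
    have A: "Suc k < 2 ^ Suc l \<longrightarrow> step x Rb (node (Suc l) (Suc k))"
    proof
      assume a: "Suc k < 2 ^ Suc l"
      then have "Suc j < 2 ^ l" using kj by simp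
      then have pq: "step p Rb (node l (Suc j))" using IH p_def by simp
      have "step (node l (Suc k div 2)) (side (Suc k)) (node (Suc l) (Suc k))" using N2[of l "Suc k"] a Suc.prems by auto
      moreover have "Suc k div 2 = Suc j" "side (Suc k) = ChL" using kj by (auto simp: side_def)
      ultimately have "step (node l (Suc j)) ChL (node (Suc l) (Suc k))" by simp
      then show "step x Rb (node (Suc l) (Suc k))" using cross_step[OF pq sR] by blast
    qed
    have B: "Suc k = 2 ^ Suc l \<longrightarrow> \<not> (\<exists>y. step x Rb y)"
    proof
      assume "Suc k = 2 ^ Suc l"
      then have "Suc j = 2 ^ l" using kj by simp
      then have "\<not> (\<exists>y. step p Rb y)" using IH p_def by simp
      then show "\<not> (\<exists>y. step x Rb y)" using ax_iR[OF s(2) sR] by blast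
    qed
    have C: "k \<noteq> 0" using kj by simp
    show ?thesis using A B C x_def by simp
  qed
qed

lemma N4: assumes "\<not> full (Suc D) r" "l \<le> D" "k < 2 ^ l"
  shows "childful (node l k) \<longleftrightarrow> l < D"
proof -
  have "childful (node l k) = full (Suc 0 + l) r" using NF[OF assms(2,3)] full1 by metis
  moreover have "l < D \<Longrightarrow> full (Suc 0 + l) r" using full_mono[OF _ fD] by simp
  moreover have "l = D \<Longrightarrow> \<not> full (Suc 0 + l) r" using assms(1) by simp
  ultimately show ?thesis using assms(2) by (cases "l < D") auto
qed

lemma nbr: assumes nf: "\<not> full (Suc D) r" and v: "l \<le> D" "k < 2 ^ l" and st: "step (node l k) s w"
  shows "\<exists>l' k'. l' \<le> D \<and> k' < 2 ^ l' \<and> w = node l' k' \<and>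
     (tree_coord_adj (l, k) (l', k') \<or> tree_coord_adj (l', k') (l, k))"
proof (cases s)
  case Lb
  have "k \<noteq> 0" using N5[OF v] st Lb by blast
  then have "Suc (k - 1) < 2 ^ l" using v by simp
  then have "step (node l (k - 1)) Rb (node l k)" using N5[OF v(1), of "k - 1"] \<open>k \<noteq> 0\<close> by simp
  then have "step (node l k) Lb (node l (k - 1))" using LR by simp
  then have "w = node l (k - 1)" using st Lb step_uniq by blast
  then show ?thesis using v \<open>k \<noteq> 0\<close> by (intro exI[of _ l] exI[of _ "k - 1"]) (auto simp: tree_coord_adj_def)
next
  case Rb
  have "Suc k < 2 ^ l"
  proof (rule ccontr)
    assume "\<not> Suc k < 2 ^ l"
    then have "Suc k = 2 ^ l" using v by simp
    then show False using N5[OF v] st Rb by blast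
  qed
  then have "w = node l (Suc k)" using N5[OF v] st Rb step_uniq by blast
  then show ?thesis using v \<open>Suc k < 2 ^ l\<close> by (intro exI[of _ l] exI[of _ "Suc k"]) (auto simp: tree_coord_adj_def)
next
  case Pb
  have "l \<noteq> 0" using st Pb rroot by (cases l) auto
  then obtain m where m: "l = Suc m" by (cases l) auto
  have "step (node l k) Pb (node m (k div 2))" using N2[of m k] v m by auto
  then have "w = node m (k div 2)" using st Pb step_uniq by blast
  then show ?thesis using v m by (intro exI[of _ m] exI[of _ "k div 2"]) (auto simp: tree_coord_adj_def)
next
  case ChL
  have "childful (node l k)" using st ChL childful_def by blast
  then have lD: "l < D" using N4[OF nf v] by simp
  have kk: "2 * k < 2 ^ Suc l" using v by simp
  have "step (node l (2 * k div 2)) (side (2 * k)) (node (Suc l) (2 * k))" using N2[OF _ kk] lD by simp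
  then have "step (node l k) ChL (node (Suc l) (2 * k))" by (simp add: side_def)
  then have "w = node (Suc l) (2 * k)" using st ChL step_uniq by blast
  then show ?thesis using lD kk by (intro exI[of _ "Suc l"] exI[of _ "2 * k"]) (auto simp: tree_coord_adj_def)
next
  case ChR
  have nV: "node l k \<in> V" using NF[OF v] by simp
  have "childful (node l k)" using st ChR ax_f[OF nV] childful_def by blast
  then have lD: "l < D" using N4[OF nf v] by simp
  have kk: "2 * k + 1 < 2 ^ Suc l" using v by simp
  have "step (node l ((2 * k + 1) div 2)) (side (2 * k + 1)) (node (Suc l) (2 * k + 1))" using N2[OF _ kk] lD by simp
  then have "step (node l k) ChR (node (Suc l) (2 * k + 1))" by (simp add: side_def)
  then have "w = node (Suc l) (2 * k + 1)" using st ChR step_uniq by blast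
  then show ?thesis using lD kk by (intro exI[of _ "Suc l"] exI[of _ "2 * k + 1"]) (auto simp: tree_coord_adj_def)
qed

lemma edge_conv: assumes v: "l \<le> D" "k < 2 ^ l" "l' \<le> D" "k' < 2 ^ l'"
  and t: "tree_coord_adj (l, k) (l', k')"
  shows "{node l k, node l' k'} \<in> E"
proof -
  have "(l' + 1 = l \<and> k' = k div 2) \<or> (l = l' \<and> k = k' + 1)" using t by (simp add: tree_coord_adj_def)
  then show ?thesis
  proof
    assume a: "l' + 1 = l \<and> k' = k div 2"
    then have ll: "l = Suc l'" "k' = k div 2" by auto
    have "step (node (Suc l') k) Pb (node l' (k div 2))" using N2[of l' k] v ll by auto
    then show ?thesis using ll unfolding step_def by blast
  next
    assume a: "l = l' \<and> k = k' + 1"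
    then have "step (node l' k') Rb (node l' (Suc k'))" using N5[of l' k'] v by auto
    then show ?thesis using a by (simp add: step_def insert_commute)
  qed
qed

lemma final: assumes nf: "\<not> full (Suc D) r" and conn: "connected_graph V E"
  shows "tree_like V E (Suc D)"
proof -
  define Val where "Val = {(l, k). l \<le> D \<and> k < (2::nat) ^ l}"
  define nd where "nd = (\<lambda>(l, k). node l k)"
  have sub1: "nd ` Val \<subseteq> V" using NF by (auto simp: nd_def Val_def)
  have rin: "r \<in> nd ` Val" unfolding nd_def Val_def by (rule image_eqI[of _ _ "(0, 0)"]) auto
  have sub2: "V \<subseteq> nd ` Val"
  proof
    fix v assume vV: "v \<in> V"
    then have "(r, v) \<in> {(x, y). {x, y} \<in> E}\<^sup>*" using conn rV by (auto simp: connected_graph_def)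
    then show "v \<in> nd ` Val"
    proof (induction rule: rtrancl_induct)
      case base then show ?case using rin .
    next
      case (step y z)
      then obtain l k where lk: "l \<le> D" "k < 2 ^ l" "y = node l k" by (auto simp: nd_def Val_def)
      have "step y (lab y {y, z}) z" using step(2) by (simp add: step_def)
      then obtain l' k' where "l' \<le> D" "k' < 2 ^ l'" "z = node l' k'" using nbr[OF nf lk(1,2)] lk(3) by blast
      then show ?case by (auto simp: nd_def Val_def)
    qed
  qed
  have VV: "V = nd ` Val" using sub1 sub2 by blast
  have inj: "inj_on nd Val"
    by (rule inj_onI) (auto simp: nd_def Val_def dest: ninj)
  define c where "c = inv_into Val nd"
  have cV: "c u \<in> Val" if "u \<in> V" for u using that VV inv_into_into c_def by metis
  have nc: "nd (c u) = u" if "u \<in> V" for u using that VV f_inv_into_f c_def by metis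
  show ?thesis unfolding tree_like_def
  proof (intro exI[of _ c] conjI ballI)
    show "inj_on c V" by (rule inj_onI) (metis nc)
  next
    fix u assume "u \<in> V"
    then have "c u \<in> Val" by (rule cV)
    then show "fst (c u) < Suc D" "snd (c u) < 2 ^ fst (c u)" by (auto simp: Val_def split: prod.splits)
  next
    fix u v assume uV: "u \<in> V" and vV: "v \<in> V"
    obtain l k where lk: "c u = (l, k)" by fastforce
    obtain l' k' where lk': "c v = (l', k')" by fastforce
    have vl: "l \<le> D" "k < 2 ^ l" using cV[OF uV] lk by (auto simp: Val_def)
    have vl': "l' \<le> D" "k' < 2 ^ l'" using cV[OF vV] lk' by (auto simp: Val_def)
    have u: "u = node l k" using nc[OF uV] lk by (simp add: nd_def)
    have v: "v = node l' k'" using nc[OF vV] lk' by (simp add: nd_def)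
    show "{u, v} \<in> E \<longleftrightarrow> tree_coord_adj (c u) (c v) \<or> tree_coord_adj (c v) (c u)"
    proof
      assume "{u, v} \<in> E"
      then have "step u (lab u {u, v}) v" by (simp add: step_def)
      then obtain l2 k2 where 2: "l2 \<le> D" "k2 < 2 ^ l2" "v = node l2 k2"
        "tree_coord_adj (l, k) (l2, k2) \<or> tree_coord_adj (l2, k2) (l, k)"
        using nbr[OF nf vl] u by blast
      have "l2 = l' \<and> k2 = k'" using ninj[OF 2(1,2) vl'] 2(3) v by simp
      then show "tree_coord_adj (c u) (c v) \<or> tree_coord_adj (c v) (c u)" using 2(4) lk lk' by simp
    next
      assume "tree_coord_adj (c u) (c v) \<or> tree_coord_adj (c v) (c u)"
      then show "{u, v} \<in> E" using edge_conv[OF vl vl'] edge_conv[OF vl' vl] lk lk' u v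
        by (auto simp: insert_commute)
    qed
  qed
qed

end

theorem lemma6p6:
  fixes V :: "'a set" and E :: "'a set set" and lab :: "'a \<Rightarrow> 'a set \<Rightarrow> label"
  assumes "simple_graph V E"
    and "connected_graph V E"
    and "valid_labeling V E lab"
  shows "tree_like_structure V E"
proof (cases "V = {}")
  case True
  have "tree_like V E 0" unfolding tree_like_def using True by (intro exI[of _ "\<lambda>_. (0, 0)"]) simp
  then show ?thesis unfolding tree_like_structure_def by blast
next
  case False
  interpret LG V E lab using assms(1,3) by unfold_locales
  obtain r where r: "r \<in> V" "\<not> (\<exists>p. step r Pb p)" using root_exists[OF False] by blast
  have ex: "\<exists>n. \<not> full n r"
  proof (rule ccontr)
    assume "\<not> ?thesis"
    then have "full (card V) r" by blast
    then interpret LGD V E lab r "card V" using r by unfold_locales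
    show False using card_bound by simp
  qed
  define n0 where "n0 = (LEAST n. \<not> full n r)"
  have n0: "\<not> full n0 r" unfolding n0_def using ex by (rule LeastI_ex)
  then have "n0 \<noteq> 0" by (cases n0) auto
  then obtain D where D: "n0 = Suc D" by (cases n0) auto
  have fD: "full D r" using not_less_Least[of D "\<lambda>n. \<not> full n r"] D n0_def by auto
  interpret LGD V E lab r D using r fD by unfold_locales
  have "tree_like V E (Suc D)" using final n0 D assms(2) by simp
  then show ?thesis unfolding tree_like_structure_def by blast
qed

end
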